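(* Let $(x_i,y_i)_{i=1}^9$ be any nine point pairs in $\mathbb P^2_x\times\mathbb P^2_y$ and $Z$ the $9\times 9$ matrix with rows $x_i^\top\otimes y_i^\top$. Then $Z$ is rank deficient if and only if there is a nonzero matrix $T\in\mathbb C^{3\times 3}$ (a possibly singular projective transformation $\mathbb P^2_x\dashrightarrow\mathbb P^2_y$) such that $y_i^\top(Tx_i)=0$ for all $i=1,\dots,9$, equivalently, $y_i$ lies on the line with normal vector $Tx_i$ for all $i$. Moreover, for such a $T$: (1) if $\operatorname{rank}T=1$, there exist a line $\ell\subset\mathbb P^2_x$ and a line $\ell'\subset\mathbb P^2_y$ such that for each $i$, $x_i\in\ell$ or $y_i\in\ell'$ (possibly both); (2) if $\operatorname{rank}T=2$, there are points $e\in\mathbb P^2_x$ and $e'\in\mathbb P^2_y$ (generating the right and left nullspaces of $T$) and a $\mathbb P^1$-homography sending the pencil of lines through $e$ to the pencil of lines through $e'$ such that the line $\ell_{ex_i}$ is sent to the line $\ell_{e'y_i}$ for each $i$; (3) if $\operatorname{rank}T=3$, then $T\in\mathrm{PGL}(3)$ and $y_i$ lies on the line with normal vector $Tx_i$ for each $i$.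
   Context: Work over $\mathbb C$. The line with normal vector $n\in\mathbb C^3\setminus\{0\}$ is $\{u\in\mathbb P^2:u^\top n=0\}$. For distinct points $a,b$, $\ell_{ab}$ denotes the line through $a$ and $b$. *)

theory Defs
  imports "HOL-Analysis.Analysis"
begin

text \<open>Points of P^2 and normal vectors of lines are represented by nonzero vectors in complex^3
  (homogeneous coordinates).  The pairing u^T n is the (non-conjugating) bilinear form.\<close>

definition bil :: "complex^3 \<Rightarrow> complex^3 \<Rightarrow> complex" where
  "bil u n = (\<Sum>j\<in>UNIV. u $ j * n $ j)"

definition proj_eq :: "complex^3 \<Rightarrow> complex^3 \<Rightarrow> bool" where
  "proj_eq a b \<longleftrightarrow> (\<exists>c. c \<noteq> 0 \<and> a = c *s b)"

text \<open>The 9x9 matrix Z with rows x_i^T tensor y_i^T; the 9 columns are indexed by pairs (j,k)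
  (lexicographic order corresponds to the Kronecker product).\<close>
definition Zmat :: "(9 \<Rightarrow> complex^3) \<Rightarrow> (9 \<Rightarrow> complex^3) \<Rightarrow> complex^(3 \<times> 3)^9" where
  "Zmat x y = (\<chi> i. \<chi> jk. x i $ fst jk * y i $ snd jk)"

text \<open>Pencil of lines through a point e, as the 2-dimensional space of normal vectors
  n with n^T e = 0 (together with 0).\<close>
definition pencil :: "complex^3 \<Rightarrow> (complex^3) set" where
  "pencil e = {n. bil n e = 0}"

end

theory Submission imports Defs begin


lemma dim_range_le_rows:
  fixes A :: "'a::field^'n^'m"
  shows "vec.dim (range ((*v) A)) \<le> vec.dim (rows A)"
proof -
  obtain B where B: "B \<subseteq> rows A" "vec.independent B" "rows A \<subseteq> vec.span B" "card B = vec.dim (rows A)"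
    using vec.basis_exists[of "rows A"] by metis
  have fB: "finite B" using B(2) vec.finiteI_independent by blast
  have "\<forall>i. \<exists>u. row i A = (\<Sum>b\<in>B. u b *s b)"
  proof
    fix i
    have "row i A \<in> vec.span B" using B(3) by (auto simp: rows_def)
    then show "\<exists>u. row i A = (\<Sum>b\<in>B. u b *s b)" using vec.span_finite[OF fB] by auto
  qed
  then obtain U where U: "\<And>i. row i A = (\<Sum>b\<in>B. U i b *s b)" by metis
  define c where "c b = (\<chi> i. U i b)" for b
  have "range ((*v) A) \<subseteq> vec.span (c ` B)"
  proof
    fix z assume "z \<in> range ((*v) A)"
    then obtain x where z: "z = A *v x" by auto
    have "A *v x = (\<Sum>b\<in>B. (\<Sum>j\<in>UNIV. b $ j * x $ j) *s c b)"
    proof (rule vec_eq_iff[THEN iffD2], rule allI)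
      fix i
      have "(A *v x) $ i = (\<Sum>j\<in>UNIV. row i A $ j * x $ j)"
        by (simp add: matrix_vector_mult_def row_def)
      also have "\<dots> = (\<Sum>j\<in>UNIV. (\<Sum>b\<in>B. U i b * b $ j) * x $ j)"
        by (simp add: U sum_component)
      also have "\<dots> = (\<Sum>b\<in>B. (\<Sum>j\<in>UNIV. b $ j * x $ j) * U i b)"
        by (simp add: sum_distrib_right sum_distrib_left mult_ac sum.swap[of _ UNIV B])
      also have "\<dots> = (\<Sum>b\<in>B. (\<Sum>j\<in>UNIV. b $ j * x $ j) *s c b) $ i"
        by (simp add: sum_component c_def)
      finally show "(A *v x) $ i = (\<Sum>b\<in>B. (\<Sum>j\<in>UNIV. b $ j * x $ j) *s c b) $ i" .
    qed
    then show "z \<in> vec.span (c ` B)" unfolding z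
      apply (simp only:)
      apply (rule vec.span_sum)
      apply (rule vec.span_scale)
      apply (rule vec.span_base)
      by (rule imageI)
  qed
  then have "vec.dim (range ((*v) A)) \<le> card (c ` B)"
    using vec.dim_le_card fB by blast
  also have "\<dots> \<le> card B" using fB card_image_le by blast
  finally show ?thesis using B(4) by simp
qed

lemma columns_sub_range: "columns (A::'a::field^'n^'m) \<subseteq> range ((*v) A)"
proof
  fix c assume "c \<in> columns A"
  then obtain j where "c = column j A" by (auto simp: columns_def)
  then have "c = A *v axis j 1"
    by (simp add: vec_eq_iff matrix_vector_mult_def column_def axis_def if_distrib cong: if_cong)
  then show "c \<in> range ((*v) A)" by auto
qed

lemma rank_facts:
  fixes A :: "'a::field^'n^'m"
  shows "rank (transpose A) = rank A" "vec.dim (range ((*v) A)) = rank A"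
proof -
  have 1: "vec.dim (range ((*v) A)) \<le> rank A" using dim_range_le_rows[of A] by (simp add: row_rank_def_gen)
  have 2: "vec.dim (range ((*v) (transpose A))) \<le> rank (transpose A)"
    using dim_range_le_rows[of "transpose A"] by (simp add: row_rank_def_gen)
  have 3: "rank (transpose A) \<le> vec.dim (range ((*v) A))"
    unfolding row_rank_def_gen rows_transpose using columns_sub_range vec.dim_subset by blast
  have 4: "rank A \<le> vec.dim (range ((*v) (transpose A)))"
    unfolding row_rank_def_gen using columns_sub_range[of "transpose A"] vec.dim_subset by (metis columns_transpose)
  show "rank (transpose A) = rank A" "vec.dim (range ((*v) A)) = rank A" using 1 2 3 4 by linarith+
qed


definition cr :: "complex^3 \<Rightarrow> complex^3 \<Rightarrow> complex^3" where
  "cr a b = vector [a$2*b$3 - a$3*b$2, a$3*b$1 - a$1*b$3, a$1*b$2 - a$2*b$1]"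

lemma cr_nth [simp]: "cr a b $ 1 = a$2*b$3 - a$3*b$2" "cr a b $ 2 = a$3*b$1 - a$1*b$3"
  "cr a b $ 3 = a$1*b$2 - a$2*b$1"
  by (simp_all add: cr_def)

lemma bil3: "bil u n = u$1*n$1 + u$2*n$2 + u$3*n$3"
  by (simp add: bil_def sum_3)

lemma vec3_eq: "(a::complex^3) = b \<longleftrightarrow> a$1 = b$1 \<and> a$2 = b$2 \<and> a$3 = b$3"
  by (simp add: vec_eq_iff forall_3)

lemma bil_comm: "bil u n = bil n u"
  by (simp add: bil3 mult.commute)

lemma cr_cr: "cr (cr a b) c = bil a c *s b - bil b c *s a"
  by (simp add: vec3_eq bil3 algebra_simps)

lemma cr_cr2: "cr a (cr b c) = bil a c *s b - bil a b *s c"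
  by (simp add: vec3_eq bil3 algebra_simps)

lemma bil_cr1: "bil (cr a b) a = 0" and bil_cr2: "bil (cr a b) b = 0"
  by (simp_all add: bil3 algebra_simps)

lemma bil_cr3: "bil a (cr a b) = 0" and bil_cr4: "bil b (cr a b) = 0"
  by (simp_all add: bil3 algebra_simps)

lemma cr_scale: "cr a (c *s a) = 0"
  by (simp add: vec3_eq algebra_simps)

lemma cr_scale_right: "cr a (c *s b) = c *s cr a b"
  by (simp add: vec3_eq algebra_simps)

lemma bil_scale: "bil (c *s a) b = c * bil a b" "bil a (c *s b) = c * bil a b"
  by (simp_all add: bil3 algebra_simps)

lemma bil_add: "bil (a + b) n = bil a n + bil b n" "bil a (n + m) = bil a n + bil a m"
  by (simp_all add: bil3 algebra_simps)

lemma bil_diff: "bil (a - b) n = bil a n - bil b n" "bil a (n - m) = bil a n - bil a m"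
  by (simp_all add: bil3 algebra_simps)

lemma bil_zero [simp]: "bil 0 n = 0" "bil n 0 = 0"
  by (simp_all add: bil3)

lemma parallel:
  assumes p: "p \<noteq> 0" and c: "cr p q = 0"
  shows "\<exists>k. q = k *s p"
proof -
  from c have c1: "p$2*q$3 = p$3*q$2" and c2: "p$3*q$1 = p$1*q$3" and c3: "p$1*q$2 = p$2*q$1"
    by (simp_all add: vec3_eq)
  consider "p$1 \<noteq> 0" | "p$2 \<noteq> 0" | "p$3 \<noteq> 0" using p by (auto simp: vec3_eq)
  then show ?thesis
  proof cases
    case 1
    show ?thesis
      by (rule exI[of _ "q$1 / p$1"]) (use 1 c1 c2 c3 in \<open>auto simp: vec3_eq field_simps\<close>)
  next
    case 2
    show ?thesis
      by (rule exI[of _ "q$2 / p$2"]) (use 2 c1 c2 c3 in \<open>auto simp: vec3_eq field_simps\<close>)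
  next
    case 3
    show ?thesis
      by (rule exI[of _ "q$3 / p$3"]) (use 3 c1 c2 c3 in \<open>auto simp: vec3_eq field_simps\<close>)
  qed
qed

lemma mv_row: "(T *v v) $ i = bil (row i T) v"
  by (simp add: matrix_vector_mult_def row_def bil_def)

lemma bil_mv: "bil w ((T::complex^3^3) *v z) = bil (w v* T) z"
  by (simp add: bil3 matrix_vector_mult_def vector_matrix_mult_def sum_3 algebra_simps)


lemma mv_zero_iff: "T *v v = 0 \<longleftrightarrow> (\<forall>r\<in>rows T. bil r v = 0)"
proof -
  have "T *v v = 0 \<longleftrightarrow> (\<forall>i. bil (row i T) v = 0)" by (simp add: vec_eq_iff mv_row)
  then show ?thesis by (auto simp: rows_def)
qed

lemma rank1_decomp:
  fixes T :: "complex^3^3"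
  assumes r: "rank T = 1" and T0: "T \<noteq> 0"
  shows "\<exists>u v. u \<noteq> 0 \<and> v \<noteq> 0 \<and> (\<forall>x. T *v x = bil x v *s u)"
proof -
  obtain B where B: "B \<subseteq> rows T" "vec.independent B" "rows T \<subseteq> vec.span B" "card B = 1"
    using vec.basis_exists[of "rows T"] r by (metis row_rank_def_gen)
  then obtain v where Bv: "B = {v}" by (auto simp: card_Suc_eq)
  have v0: "v \<noteq> 0" using B(2) Bv vec.dependent_zero by blast
  have "\<forall>i. \<exists>c. row i T = c *s v"
    using B(3) Bv by (auto simp: rows_def vec.span_singleton)
  then obtain c where c: "\<And>i. row i T = c i *s v" by metis
  define u where "u = (\<chi> i. c i)"
  have Tx: "T *v x = bil x v *s u" for x
    by (simp add: vec_eq_iff mv_row c u_def bil_scale bil_comm[of v])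
  have "u \<noteq> 0"
  proof
    assume "u = 0"
    then have "T *v x = 0" for x by (simp add: Tx)
    then have "T = 0"
      by (metis matrix_eq matrix_vector_mult_0)
    then show False using T0 by simp
  qed
  then show ?thesis using v0 Tx by blast
qed

lemma rank2_kernel:
  fixes T :: "complex^3^3"
  assumes r: "rank T = 2"
  shows "\<exists>e. e \<noteq> 0 \<and> {v. T *v v = 0} = {c *s e | c. True}"
proof -
  obtain B where B: "B \<subseteq> rows T" "vec.independent B" "rows T \<subseteq> vec.span B" "card B = 2"
    using vec.basis_exists[of "rows T"] r by (metis row_rank_def_gen)
  then obtain a b where Bab: "B = {a, b}" and ab: "a \<noteq> b" by (auto simp: card_2_iff)
  have a0: "a \<noteq> 0" using B(2) Bab vec.dependent_zero by blast
  define e where "e = cr a b"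
  have e0: "e \<noteq> 0"
  proof
    assume "e = 0"
    then have "cr a b = 0" using e_def by simp
    then obtain k where "b = k *s a" using parallel[OF a0] by blast
    then have "b \<in> vec.span (B - {b})" using Bab ab
      by (auto simp: vec.span_singleton insert_Diff_if)
    then show False using B(2) Bab vec.dependent_def by blast
  qed
  have "{v. T *v v = 0} = {c *s e | c. True}"
  proof (intro set_eqI iffI)
    fix v assume "v \<in> {v. T *v v = 0}"
    then have "bil a v = 0" "bil b v = 0" using B(1) Bab by (auto simp: mv_zero_iff)
    then have "cr e v = 0" by (simp add: e_def cr_cr)
    then show "v \<in> {c *s e | c. True}" using parallel[OF e0] by auto
  next
    fix v assume "v \<in> {c *s e | c. True}"
    then obtain k where v: "v = k *s e" by auto
    have "bil r e = 0" if "r \<in> rows T" for r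
    proof -
      have "r \<in> vec.span B" using that B(3) by auto
      then show ?thesis
      proof (induction rule: vec.span_induct_alt)
        case base then show ?case by simp
      next
        case (step c x y)
        then have "bil x e = 0" using Bab by (auto simp: e_def bil_cr3 bil_cr4)
        with step show ?case by (simp add: bil_add bil_scale)
      qed
    qed
    then show "v \<in> {v. T *v v = 0}" by (simp add: v mv_zero_iff bil_scale)
  qed
  then show ?thesis using e0 by blast
qed

lemma rank3_inv:
  fixes T :: "complex^3^3"
  assumes "rank T = 3"
  shows "invertible T"
proof -
  have "vec.dim (UNIV::(complex^3) set) \<le> vec.dim (rows T)"
    using assms by (simp add: row_rank_def_gen vec_dim_card card_cart_basis)
  then have "vec.span (rows T) = UNIV" using vec.dim_eq_span[of "rows T" UNIV] vec.span_UNIV by auto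
  then show ?thesis using matrix_left_invertible_span_rows_gen invertible_left_inverse by blast
qed

lemma range_pencil:
  fixes T :: "complex^3^3"
  assumes r: "rank T = 2" and e0: "e' \<noteq> 0" and ker: "{w. w v* T = 0} = {c *s e' | c. True}"
  shows "range ((*v) T) = pencil e'"
proof -
  have "e' \<in> {c *s e' | c. True}" by (rule CollectI, rule exI[of _ 1]) simp
  then have ee: "e' v* T = 0" using ker by blast
  have sub: "range ((*v) T) \<subseteq> pencil e'"
    by (auto simp: pencil_def bil_comm[of _ e'] bil_mv ee)
  have sp: "vec.subspace (pencil e')"
    by (rule vec.subspaceI) (auto simp: pencil_def bil_add bil_scale)
  have sr: "vec.subspace (range ((*v) T))"
    using vec.subspace_image[OF vec.subspace_UNIV] by simp
  obtain k where k: "e' $ k \<noteq> 0" using e0 by (metis vec_eq_iff zero_index)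
  have "axis k 1 \<notin> pencil e'" using k
    using exhaust_3[of k] by (auto simp: pencil_def bil3 axis_def)
  moreover have "vec.span (pencil e') = pencil e'" using vec.span_eq_iff sp by blast
  ultimately have "vec.span (pencil e') \<noteq> UNIV" by (metis UNIV_I)
  then have "vec.dim (pencil e') \<noteq> 3"
    using vec.dim_eq_span[of "pencil e'" UNIV] vec.span_UNIV vec_dim_card[where 'a=complex and 'n=3] by auto
  moreover have "vec.dim (pencil e') \<le> 3" using dim_subset_UNIV_cart_gen[of "pencil e'"] by simp
  ultimately have "vec.dim (pencil e') \<le> vec.dim (range ((*v) T))"
    using rank_facts(2)[of T] r by simp
  then show ?thesis using vec.subspace_dim_equal[OF sr sp sub] by simp
qed


lemma cr_scale_left: "cr (c *s a) b = c *s cr a b"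
  by (simp add: vec3_eq algebra_simps)

lemma cr_diff_left: "cr (a - b) f = cr a f - cr b f"
  by (simp add: vec3_eq algebra_simps)

definition crm :: "complex^3 \<Rightarrow> complex^3^3" where
  "crm f = vector [vector [0, f$3, -f$2], vector [-f$3, 0, f$1], vector [f$2, -f$1, 0]]"

lemma crm_mv: "crm f *v n = cr n f"
  by (simp add: vec3_eq crm_def matrix_vector_mult_def sum_3 algebra_simps)

lemma rank2_part:
  fixes T :: "complex^3^3" and x y :: "9 \<Rightarrow> complex^3"
  assumes hx: "\<forall>i. x i \<noteq> 0" and hT: "\<forall>i. bil (y i) (T *v x i) = 0" and r: "rank T = 2"
  shows "\<exists>e e' H. e \<noteq> 0 \<and> e' \<noteq> 0
               \<and> {v. T *v v = 0} = {c *s e | c. True}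
               \<and> {w. w v* T = 0} = {c *s e' | c. True}
               \<and> bij_betw (\<lambda>n. (H::complex^3^3) *v n) (pencil e) (pencil e')
               \<and> (\<forall>i. \<not> proj_eq (x i) e \<and> \<not> proj_eq (y i) e' \<longrightarrow>
                     (\<forall>n. n \<noteq> 0 \<and> bil e n = 0 \<and> bil (x i) n = 0 \<longrightarrow>
                          bil e' (H *v n) = 0 \<and> bil (y i) (H *v n) = 0))"
proof -
  obtain e where e0: "e \<noteq> 0" and ker: "{v. T *v v = 0} = {c *s e | c. True}"
    using rank2_kernel[OF r] by blast
  have rt: "rank (transpose T) = 2" using r rank_facts(1)[of T] by simp
  obtain e' where e'0: "e' \<noteq> 0" and ker': "{v. transpose T *v v = 0} = {c *s e' | c. True}"
    using rank2_kernel[OF rt] by blast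
  have lker: "{w. w v* T = 0} = {c *s e' | c. True}" using ker' by simp
  have rng: "range ((*v) T) = pencil e'" using range_pencil[OF r e'0 lker] .
  have "e \<in> {c *s e | c. True}" by (rule CollectI, rule exI[of _ 1]) simp
  then have Te: "T *v e = 0" using ker by blast
  have "e' \<in> {c *s e' | c. True}" by (rule CollectI, rule exI[of _ 1]) simp
  then have ee: "e' v* T = 0" using lker by blast
  have e'T: "bil e' (T *v z) = 0" for z by (simp add: bil_mv ee)
  obtain k where k: "e $ k \<noteq> 0" using e0 by (metis vec_eq_iff zero_index)
  define f where "f = axis k (1 / e $ k)"
  have ef: "bil e f = 1" using k exhaust_3[of k] by (auto simp: f_def bil3 axis_def)
  define H where "H = T ** crm f"
  have Hn: "H *v n = T *v cr n f" for n
    by (simp add: H_def crm_mv flip: matrix_vector_mul_assoc)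
  have key: "H *v cr e v = T *v v" for v
  proof -
    have "H *v cr e v = T *v (bil e f *s v - bil v f *s e)" by (simp add: Hn cr_cr)
    also have "\<dots> = T *v v" by (simp add: ef matrix_vector_mult_diff_distrib vector_scalar_commute Te)
    finally show ?thesis .
  qed
  have bij: "bij_betw (\<lambda>n. H *v n) (pencil e) (pencil e')"
  proof (rule bij_betw_imageI)
    show "inj_on ((*v) H) (pencil e)"
    proof (rule inj_onI)
      fix n m assume n: "n \<in> pencil e" and m: "m \<in> pencil e" and eq: "H *v n = H *v m"
      define d where "d = n - m"
      have de: "bil d e = 0" using n m by (simp add: d_def pencil_def bil_diff)
      have "T *v cr d f = 0" using eq
        by (simp add: Hn d_def cr_diff_left matrix_vector_mult_diff_distrib)
      then obtain c where c: "cr d f = c *s e" using ker by blast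
      have "cr e (cr d f) = d" by (simp add: cr_cr2 ef bil_comm[of e d] de)
      then have "d = 0" by (simp add: c cr_scale)
      then show "n = m" by (simp add: d_def)
    qed
    show "(*v) H ` pencil e = pencil e'"
    proof (intro set_eqI iffI)
      fix w assume "w \<in> (*v) H ` pencil e"
      then show "w \<in> pencil e'" by (auto simp: pencil_def Hn bil_comm[of _ e'] e'T)
    next
      fix w assume "w \<in> pencil e'"
      then obtain v where w: "w = T *v v" using rng by auto
      have "cr e v \<in> pencil e" by (simp add: pencil_def bil_cr1)
      moreover have "H *v cr e v = w" using key w by simp
      ultimately show "w \<in> (*v) H ` pencil e" by blast
    qed
  qed
  have pt: "bil e' (H *v n) = 0 \<and> bil (y i) (H *v n) = 0"
    if np: "\<not> proj_eq (x i) e" and n: "n \<noteq> 0" "bil e n = 0" "bil (x i) n = 0" for i n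
  proof -
    have c0: "cr e (x i) \<noteq> 0"
    proof
      assume "cr e (x i) = 0"
      then obtain c where c: "x i = c *s e" using parallel[OF e0] by blast
      then have "c \<noteq> 0" using hx by auto
      then show False using np c by (auto simp: proj_eq_def)
    qed
    have "cr (cr e (x i)) n = 0" by (simp add: cr_cr n)
    then obtain c where c: "n = c *s cr e (x i)" using parallel[OF c0] by blast
    have "H *v n = c *s (T *v x i)" by (simp add: c cr_scale_left vector_scalar_commute key flip: Hn)
    then show ?thesis by (simp add: e'T bil_scale hT)
  qed
  show ?thesis
    apply (rule exI[of _ e], rule exI[of _ e'], rule exI[of _ H])
    using e0 e'0 ker lker bij pt by blast
qed

lemma sum_prod3: "(\<Sum>jk\<in>(UNIV::(3\<times>3) set). f jk) = (\<Sum>j\<in>UNIV. \<Sum>k\<in>UNIV. f (j,k))"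
  by (subst UNIV_Times_UNIV[symmetric]) (simp only: sum.cartesian_product case_prod_eta)

lemma Z_mv: "(Zmat x y *v t) $ i = bil (y i) ((\<chi> k j. t $ (j,k)) *v x i)"
  by (simp add: Zmat_def matrix_vector_mult_def sum_prod3 sum_3 bil3 algebra_simps)

lemma Z_rank:
  fixes Z :: "complex^(3\<times>3)^9"
  shows "rank Z < 9 \<longleftrightarrow> (\<exists>t. t \<noteq> 0 \<and> Z *v t = 0)"
proof -
  have le: "rank Z \<le> 9" using dim_subset_UNIV_cart_gen[of "rows Z"] by (simp add: row_rank_def_gen)
  have dU: "vec.dim (UNIV :: (complex^(3\<times>3)) set) = 9" by (simp add: vec_dim_card card_cart_basis)
  have "rank Z = 9 \<longleftrightarrow> vec.span (rows Z) = UNIV"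
  proof
    assume "rank Z = 9"
    then show "vec.span (rows Z) = UNIV"
      using vec.dim_eq_span[of "rows Z" UNIV] vec.span_UNIV dU by (auto simp: row_rank_def_gen)
  next
    assume "vec.span (rows Z) = UNIV"
    then have "vec.dim (vec.span (rows Z)) = 9" using dU by simp
    then show "rank Z = 9" by (simp add: row_rank_def_gen)
  qed
  also have "\<dots> \<longleftrightarrow> (\<forall>x. Z *v x = 0 \<longrightarrow> x = 0)"
    using matrix_left_invertible_span_rows_gen[of Z] matrix_left_invertible_ker[of Z] by blast
  finally show ?thesis using le by auto
qed



theorem mainTheorem4:
  fixes x y :: "9 \<Rightarrow> complex^3"
  assumes hx: "\<forall>i. x i \<noteq> 0" and hy: "\<forall>i. y i \<noteq> 0"
  shows "(rank (Zmat x y) < 9 \<longleftrightarrow>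
            (\<exists>T::complex^3^3. T \<noteq> 0 \<and> (\<forall>i. bil (y i) (T *v x i) = 0)))
    \<and> (\<forall>T::complex^3^3. T \<noteq> 0 \<and> (\<forall>i. bil (y i) (T *v x i) = 0) \<longrightarrow>
         (rank T = 1 \<longrightarrow>
            (\<exists>n n'. n \<noteq> 0 \<and> n' \<noteq> 0 \<and> (\<forall>i. bil (x i) n = 0 \<or> bil (y i) n' = 0)))
       \<and> (rank T = 2 \<longrightarrow>
            (\<exists>e e' H. e \<noteq> 0 \<and> e' \<noteq> 0
               \<and> {v. T *v v = 0} = {c *s e | c. True}
               \<and> {w. w v* T = 0} = {c *s e' | c. True}
               \<and> bij_betw (\<lambda>n. (H::complex^3^3) *v n) (pencil e) (pencil e')
               \<and> (\<forall>i. \<not> proj_eq (x i) e \<and> \<not> proj_eq (y i) e' \<longrightarrow>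
                     (\<forall>n. n \<noteq> 0 \<and> bil e n = 0 \<and> bil (x i) n = 0 \<longrightarrow>
                          bil e' (H *v n) = 0 \<and> bil (y i) (H *v n) = 0))))
       \<and> (rank T = 3 \<longrightarrow> invertible T \<and> (\<forall>i. bil (y i) (T *v x i) = 0)))"
  proof -
  have P1: "rank (Zmat x y) < 9 \<longleftrightarrow> (\<exists>T::complex^3^3. T \<noteq> 0 \<and> (\<forall>i. bil (y i) (T *v x i) = 0))"
  proof
    assume "rank (Zmat x y) < 9"
    then obtain t where t0: "t \<noteq> 0" and tZ: "Zmat x y *v t = 0" using Z_rank by blast
    define T :: "complex^3^3" where "T = (\<chi> k j. t $ (j,k))"
    have "T \<noteq> 0"
    proof
      assume T0: "T = 0"
      have "t $ jk = 0" for jk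
      proof -
        obtain j k where jk: "jk = (j,k)" by (cases jk)
        have "T $ k $ j = 0" using T0 by simp
        then show ?thesis by (simp add: T_def jk)
      qed
      then show False using t0 by (simp add: vec_eq_iff)
    qed
    moreover have "\<forall>i. bil (y i) (T *v x i) = 0"
      using tZ by (metis T_def Z_mv zero_index)
    ultimately show "\<exists>T::complex^3^3. T \<noteq> 0 \<and> (\<forall>i. bil (y i) (T *v x i) = 0)" by blast
  next
    assume "\<exists>T::complex^3^3. T \<noteq> 0 \<and> (\<forall>i. bil (y i) (T *v x i) = 0)"
    then obtain T :: "complex^3^3" where T0: "T \<noteq> 0" and hT: "\<forall>i. bil (y i) (T *v x i) = 0" by blast
    define t :: "complex^(3\<times>3)" where "t = (\<chi> jk. T $ snd jk $ fst jk)"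
    have tT: "(\<chi> k j. t $ (j,k)) = T" by (simp add: t_def vec_eq_iff)
    have "Zmat x y *v t = 0" by (simp add: vec_eq_iff Z_mv tT hT)
    moreover have "t \<noteq> 0"
    proof
      assume "t = 0"
      then have "(\<chi> k j. t $ (j,k)) = (0::complex^3^3)" by (simp add: vec_eq_iff)
      then show False using tT T0 by simp
    qed
    ultimately show "rank (Zmat x y) < 9" using Z_rank by blast
  qed
  have P2: "(rank T = 1 \<longrightarrow>
            (\<exists>n n'. n \<noteq> 0 \<and> n' \<noteq> 0 \<and> (\<forall>i. bil (x i) n = 0 \<or> bil (y i) n' = 0)))
       \<and> (rank T = 2 \<longrightarrow>
            (\<exists>e e' H. e \<noteq> 0 \<and> e' \<noteq> 0
               \<and> {v. T *v v = 0} = {c *s e | c. True}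
               \<and> {w. w v* T = 0} = {c *s e' | c. True}
               \<and> bij_betw (\<lambda>n. (H::complex^3^3) *v n) (pencil e) (pencil e')
               \<and> (\<forall>i. \<not> proj_eq (x i) e \<and> \<not> proj_eq (y i) e' \<longrightarrow>
                     (\<forall>n. n \<noteq> 0 \<and> bil e n = 0 \<and> bil (x i) n = 0 \<longrightarrow>
                          bil e' (H *v n) = 0 \<and> bil (y i) (H *v n) = 0))))
       \<and> (rank T = 3 \<longrightarrow> invertible T \<and> (\<forall>i. bil (y i) (T *v x i) = 0))"
    if T0: "T \<noteq> 0" and hT: "\<forall>i. bil (y i) (T *v x i) = 0" for T :: "complex^3^3"
  proof (intro conjI impI)
    assume "rank T = 1"
    then obtain u v where u0: "u \<noteq> 0" and v0: "v \<noteq> 0" and Tx: "\<forall>x. T *v x = bil x v *s u"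
      using rank1_decomp T0 by blast
    have "\<forall>i. bil (x i) v = 0 \<or> bil (y i) u = 0"
      using hT by (simp add: Tx bil_scale)
    then show "\<exists>n n'. n \<noteq> 0 \<and> n' \<noteq> 0 \<and> (\<forall>i. bil (x i) n = 0 \<or> bil (y i) n' = 0)"
      using u0 v0 by blast
  next
    assume "rank T = 2"
    then show "\<exists>e e' H. e \<noteq> 0 \<and> e' \<noteq> 0
               \<and> {v. T *v v = 0} = {c *s e | c. True}
               \<and> {w. w v* T = 0} = {c *s e' | c. True}
               \<and> bij_betw (\<lambda>n. (H::complex^3^3) *v n) (pencil e) (pencil e')
               \<and> (\<forall>i. \<not> proj_eq (x i) e \<and> \<not> proj_eq (y i) e' \<longrightarrow>
                     (\<forall>n. n \<noteq> 0 \<and> bil e n = 0 \<and> bil (x i) n = 0 \<longrightarrow>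
                          bil e' (H *v n) = 0 \<and> bil (y i) (H *v n) = 0))"
      using rank2_part[OF hx hT] by blast
  next
    assume "rank T = 3"
    then show "invertible T" by (rule rank3_inv)
  next
    show "\<forall>i. bil (y i) (T *v x i) = 0" by (rule hT)
  qed
  show ?thesis using P1 P2 by blast
qed

end
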